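(* Let $k\le l$ be positive integers with $\gcd(k,l)=1$, let $n\ge1$ and $m\ge0$ be integers, and write $m=qn+r$ with integers $q\ge 0$, $0\le r<n$. Then $$U^{k,l}(m,n)\le \max\bigl(nkq,\ nkq+r(k+l)-nl\bigr).$$
   Context: $\mathcal D^{k,l}(m,n)$ denotes the set of all $nk\times nl$ matrices with nonnegative integer entries all of whose row sums equal $ml$ and all of whose column sums equal $mk$. For an $s\times t$ matrix $A=(a_{ij})$ with $s\le t$, a transversal of $A$ is a set of entries $T=\{a_{1i_1},\dots,a_{si_s}\}$ with $i_1,\dots,i_s\in\{1,\dots,t\}$ pairwise distinct, and $|T|=a_{1i_1}+\cdots+a_{si_s}$. Define ${\rm tropdet}(A)=\min_T|T|$ over all transversals $T$ of $A$, and $U^{k,l}(m,n)=\max_{A\in\mathcal D^{k,l}(m,n)}{\rm tropdet}(A)$. *)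

theory Defs
  imports Main
begin

text \<open>Matrices are functions nat => nat => nat; an s x t matrix uses the indices
  i < s, j < t and is required to vanish outside this range (so that the
  set of such matrices with given line sums is finite).\<close>

definition Dkl :: "nat \<Rightarrow> nat \<Rightarrow> nat \<Rightarrow> nat \<Rightarrow> (nat \<Rightarrow> nat \<Rightarrow> nat) set" where
  "Dkl k l m n = {A. (\<forall>i j. (i \<ge> n*k \<or> j \<ge> n*l) \<longrightarrow> A i j = 0)
      \<and> (\<forall>i < n*k. (\<Sum>j<n*l. A i j) = m*l)
      \<and> (\<forall>j < n*l. (\<Sum>i<n*k. A i j) = m*k)}"

definition transversals :: "nat \<Rightarrow> nat \<Rightarrow> (nat \<Rightarrow> nat) set" where
  "transversals s t = {\<sigma>. inj_on \<sigma> {..<s} \<and> \<sigma> ` {..<s} \<subseteq> {..<t} \<and> (\<forall>i\<ge>s. \<sigma> i = 0)}"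

definition tropdet :: "nat \<Rightarrow> nat \<Rightarrow> (nat \<Rightarrow> nat \<Rightarrow> nat) \<Rightarrow> nat" where
  "tropdet s t A = Min ((\<lambda>\<sigma>. \<Sum>i<s. A i (\<sigma> i)) ` transversals s t)"

definition U :: "nat \<Rightarrow> nat \<Rightarrow> nat \<Rightarrow> nat \<Rightarrow> nat" where
  "U k l m n = Max (tropdet (n*k) (n*l) ` Dkl k l m n)"

end

theory Submission
  imports Defs "HOL-Combinatorics.Permutations"
begin


fun wc :: "(nat \<Rightarrow> nat \<Rightarrow> int) \<Rightarrow> nat list \<Rightarrow> int" where
  "wc f (a # b # vs) = f a b + wc f (b # vs)"
| "wc f _ = 0"

lemma wc_append: "wc f (xs @ y # ys) = wc f (xs @ [y]) + wc f (y # ys)"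
proof (induction xs)
  case Nil then show ?case by simp
next
  case (Cons a xs) then show ?case by (cases xs) auto
qed

lemma wc_zip: "wc f vs = sum_list (map (\<lambda>(a,b). f a b) (zip vs (tl vs)))"
  by (induction f vs rule: wc.induct) auto

lemma cyc_nonneg:
  fixes Q :: "nat \<Rightarrow> nat \<Rightarrow> int"
  assumes opt: "\<And>\<tau>. \<tau> permutes {..<M} \<Longrightarrow> (\<Sum>c<M. Q c c) \<le> (\<Sum>c<M. Q c (\<tau> c))"
    and d: "distinct cs" and s: "set cs \<subseteq> {..<M}" and ne: "cs \<noteq> []"
  shows "0 \<le> wc (\<lambda>a b. Q a b - Q a a) (cs @ [hd cs])"
proof -
  define rs where "rs = rotate1 cs"
  define \<tau> where "\<tau> c = (case map_of (zip cs rs) c of Some d \<Rightarrow> d | None \<Rightarrow> c)" for c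
  have len: "length rs = length cs" by (simp add: rs_def)
  have dr: "distinct rs" and sr: "set rs = set cs" using d by (auto simp: rs_def)
  have tn: "\<tau> (cs ! t) = rs ! t" if "t < length cs" for t
    using map_of_zip_nth[OF len[symmetric] d] that len by (simp add: \<tau>_def)
  have tout: "\<tau> c = c" if "c \<notin> set cs" for c
  proof -
    have "map_of (zip cs rs) c = None" using that len by simp
    then show ?thesis by (simp add: \<tau>_def)
  qed
  have timg: "\<tau> ` set cs \<subseteq> set cs"
  proof
    fix y assume "y \<in> \<tau> ` set cs"
    then obtain t where t: "t < length cs" "y = \<tau> (cs ! t)" by (auto simp: in_set_conv_nth)
    then show "y \<in> set cs" using tn[OF t(1)] len sr by (metis nth_mem)
  qed
  have tinj: "inj_on \<tau> (set cs)"
  proof (rule inj_onI)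
    fix a b assume "a \<in> set cs" "b \<in> set cs" "\<tau> a = \<tau> b"
    then obtain t t' where "t < length cs" "a = cs ! t" "t' < length cs" "b = cs ! t'"
      by (auto simp: in_set_conv_nth)
    then show "a = b" using \<open>\<tau> a = \<tau> b\<close> tn dr len by (simp add: nth_eq_iff_index_eq)
  qed
  have "\<tau> ` set cs = set cs" by (rule endo_inj_surj[OF _ timg tinj]) simp
  then have "bij_betw \<tau> (set cs) (set cs)" using tinj by (simp add: bij_betw_def)
  then have "\<tau> permutes set cs" using tout by (rule bij_imp_permutes)
  then have perm: "\<tau> permutes {..<M}" using s by (rule permutes_subset)
  define g where "g c = Q c (\<tau> c) - Q c c" for c
  have "(\<Sum>c<M. Q c (\<tau> c)) - (\<Sum>c<M. Q c c) = (\<Sum>c<M. g c)"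
    by (simp add: g_def sum_subtractf)
  also have "\<dots> = (\<Sum>c\<in>set cs. g c)"
    using s by (intro sum.mono_neutral_right) (auto simp: g_def tout)
  also have "\<dots> = sum_list (map g cs)" using d by (simp add: sum_list_distinct_conv_sum_set)
  also have "map g cs = map (\<lambda>(a,b). Q a b - Q a a) (zip cs rs)"
    by (rule nth_equalityI) (auto simp: len g_def tn)
  also have "zip cs rs = zip (cs @ [hd cs]) (tl (cs @ [hd cs]))"
  proof -
    have "tl (cs @ [hd cs]) = rs" using ne by (cases cs) (auto simp: rs_def)
    moreover have "zip (cs @ [hd cs]) rs = zip cs rs" by (simp add: zip_append1 len)
    ultimately show ?thesis by simp
  qed
  finally have "(\<Sum>c<M. Q c (\<tau> c)) - (\<Sum>c<M. Q c c) = wc (\<lambda>a b. Q a b - Q a a) (cs @ [hd cs])"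
    by (simp add: wc_zip)
  with opt[OF perm] show ?thesis by linarith
qed

lemma closed_nonneg:
  assumes cyc: "\<And>cs. distinct cs \<Longrightarrow> set cs \<subseteq> {..<M} \<Longrightarrow> cs \<noteq> [] \<Longrightarrow> 0 \<le> wc f (cs @ [hd cs])"
  shows "set (v # ys) \<subseteq> {..<M} \<Longrightarrow> 0 \<le> wc f (v # ys @ [v])"
proof (induction "length ys" arbitrary: v ys rule: less_induct)
  case less
  show ?case
  proof (cases "distinct (v # ys)")
    case True
    from cyc[OF True less.prems] show ?thesis by simp
  next
    case False
    show ?thesis
    proof (cases "v \<in> set ys")
      case True
      then obtain ys1 ys2 where ys: "ys = ys1 @ v # ys2" by (meson split_list)
      have "wc f (v # ys @ [v]) = wc f (v # ys1 @ [v]) + wc f (v # ys2 @ [v])"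
        using wc_append[of f "v # ys1" v "ys2 @ [v]"] by (simp add: ys)
      moreover have "0 \<le> wc f (v # ys1 @ [v])" using less ys by auto
      moreover have "0 \<le> wc f (v # ys2 @ [v])" using less ys by auto
      ultimately show ?thesis by simp
    next
      case False
      then have "\<not> distinct ys" using \<open>\<not> distinct (v # ys)\<close> by simp
      then obtain a y b c where ys: "ys = a @ [y] @ b @ [y] @ c"
        using not_distinct_decomp by blast
      have e1: "wc f (v # ys @ [v]) = wc f (v # a @ [y]) + (wc f (y # b @ [y]) + wc f (y # c @ [v]))"
        using wc_append[of f "v # a" y "b @ y # c @ [v]"] wc_append[of f "y # b" y "c @ [v]"]
        by (simp add: ys)
      have e2: "wc f (v # (a @ y # c) @ [v]) = wc f (v # a @ [y]) + wc f (y # c @ [v])"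
        using wc_append[of f "v # a" y "c @ [v]"] by simp
      have "0 \<le> wc f (v # (a @ y # c) @ [v])" using less.hyps[of "a @ y # c" v] less.prems ys by auto
      moreover have "0 \<le> wc f (y # b @ [y])" using less.hyps[of b y] less.prems ys by auto
      ultimately show ?thesis using e1 e2 by simp
    qed
  qed
qed

lemma walk_ge_distinct:
  assumes closed: "\<And>v ys. set (v # ys) \<subseteq> {..<M} \<Longrightarrow> 0 \<le> wc f (v # ys @ [v])"
  shows "ws \<noteq> [] \<Longrightarrow> set ws \<subseteq> {..<M} \<Longrightarrow>
    \<exists>ws'. ws' \<noteq> [] \<and> hd ws' = hd ws \<and> distinct ws' \<and> set ws' \<subseteq> {..<M} \<and> wc f ws' \<le> wc f ws"
proof (induction "length ws" arbitrary: ws rule: less_induct)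
  case less
  show ?case
  proof (cases "distinct ws")
    case True thus ?thesis using less.prems by blast
  next
    case False
    then obtain a y b c where ws: "ws = a @ [y] @ b @ [y] @ c"
      using not_distinct_decomp by blast
    have e1: "wc f ws = wc f (a @ [y]) + (wc f (y # b @ [y]) + wc f (y # c))"
      using wc_append[of f a y "b @ y # c"] wc_append[of f "y # b" y c] by (simp add: ws)
    have e2: "wc f (a @ y # c) = wc f (a @ [y]) + wc f (y # c)"
      using wc_append[of f a y c] by simp
    have "0 \<le> wc f (y # b @ [y])" using closed less.prems ws by auto
    moreover have "hd (a @ y # c) = hd ws" by (cases a) (auto simp: ws)
    moreover have "length (a @ y # c) < length ws" by (simp add: ws)
    moreover have "a @ y # c \<noteq> []" by simp
    moreover have "set (a @ y # c) \<subseteq> {..<M}" using less.prems ws by auto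
    ultimately obtain ws' where ws': "ws' \<noteq> []" "hd ws' = hd ws" "distinct ws'" "set ws' \<subseteq> {..<M}"
        "wc f ws' \<le> wc f (a @ y # c)" "0 \<le> wc f (y # b @ [y])"
      using less.hyps[of "a @ y # c"] by metis
    have "wc f ws' \<le> wc f ws" using ws'(5,6) e1 e2 by linarith
    then show ?thesis using ws' by blast
  qed
qed

lemma potentials:
  fixes Q :: "nat \<Rightarrow> nat \<Rightarrow> int"
  assumes opt: "\<And>\<tau>. \<tau> permutes {..<M} \<Longrightarrow> (\<Sum>c<M. Q c c) \<le> (\<Sum>c<M. Q c (\<tau> c))"
  shows "\<exists>x. \<forall>c<M. \<forall>j<M. x c - x j \<le> Q c j - Q c c"
proof -
  define f where "f a b = Q a b - Q a a" for a b
  have cyc: "\<And>cs. distinct cs \<Longrightarrow> set cs \<subseteq> {..<M} \<Longrightarrow> cs \<noteq> [] \<Longrightarrow> 0 \<le> wc f (cs @ [hd cs])"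
    unfolding f_def by (rule cyc_nonneg) (auto intro: opt)
  have closed: "\<And>v ys. set (v # ys) \<subseteq> {..<M} \<Longrightarrow> 0 \<le> wc f (v # ys @ [v])"
    by (rule closed_nonneg[OF cyc])
  define D where "D c = {wc f ws | ws. ws \<noteq> [] \<and> hd ws = c \<and> distinct ws \<and> set ws \<subseteq> {..<M}}" for c
  define x where "x c = Min (D c)" for c
  have fin: "finite (D c)" for c
  proof -
    have "D c \<subseteq> wc f ` {ws. set ws \<subseteq> {..<M} \<and> length ws \<le> M}"
    proof
      fix z assume "z \<in> D c"
      then obtain ws where ws: "z = wc f ws" "distinct ws" "set ws \<subseteq> {..<M}" by (auto simp: D_def)
      then have "length ws \<le> M" using distinct_card[OF ws(2)] card_mono[OF _ ws(3)] by fastforce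
      then show "z \<in> wc f ` {ws. set ws \<subseteq> {..<M} \<and> length ws \<le> M}" using ws by auto
    qed
    then show ?thesis by (rule finite_subset) (intro finite_imageI finite_lists_length_le, simp)
  qed
  have lower: "x (hd ws) \<le> wc f ws" if nw: "ws \<noteq> []" "set ws \<subseteq> {..<M}" for ws
  proof -
    obtain ws' where ws': "ws' \<noteq> [] \<and> hd ws' = hd ws \<and> distinct ws' \<and> set ws' \<subseteq> {..<M} \<and> wc f ws' \<le> wc f ws"
      using walk_ge_distinct[OF closed nw] by blast
    then have "wc f ws' \<in> D (hd ws)" by (auto simp: D_def)
    then have "x (hd ws) \<le> wc f ws'" unfolding x_def using fin by (rule Min_le[rotated])
    then show ?thesis using ws' by linarith
  qed
  show ?thesis
  proof (intro exI allI impI)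
    fix c j assume c: "c < M" and j: "j < M"
    have "[j] \<noteq> [] \<and> hd [j] = j \<and> distinct [j] \<and> set [j] \<subseteq> {..<M}" using j by simp
    then have "wc f [j] \<in> D j" unfolding D_def mem_Collect_eq by (intro exI[of _ "[j]"]) simp
    then have "D j \<noteq> {}" by auto
    then have "x j \<in> D j" unfolding x_def using fin by (rule Min_in[rotated])
    then obtain ws where ws: "x j = wc f ws" "ws \<noteq> []" "hd ws = j" "set ws \<subseteq> {..<M}"
      by (auto simp: D_def)
    then obtain rest where ws2: "ws = j # rest" by (cases ws) auto
    have "x c \<le> wc f (c # ws)" using lower[of "c # ws"] ws c by auto
    also have "wc f (c # ws) = f c j + x j" using ws ws2 by simp
    finally show "x c - x j \<le> Q c j - Q c c" by (simp add: f_def)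
  qed
qed



lemma arith_final:
  fixes W L :: int and n k l m q r :: nat
  assumes h1: "W \<le> int (n*k) * L" and h2: "W \<le> int (m*l) + int (m*k) - int (n*l) * L"
    and m: "m = q*n + r" and r: "r < n" and kl: "k \<le> l"
  shows "W \<le> max (int (n*k*q)) (int (n*k*q) + int r * int (k+l) - int (n*l))"
proof (cases "L \<le> int q")
  case True
  have "int (n*k) * L \<le> int (n*k) * int q" by (rule mult_left_mono[OF True]) simp
  then show ?thesis using h1 by (simp add: ac_simps)
next
  case False
  then have "int q + 1 \<le> L" by simp
  then have "int (n*l) * (int q + 1) \<le> int (n*l) * L" by (rule mult_left_mono) simp
  moreover have "int (m*l) + int (m*k) - int (n*l) * (int q + 1) = int (n*k*q) + int r * int (k+l) - int (n*l)"
    by (simp add: m algebra_simps)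
  ultimately show ?thesis using h2 by linarith
qed

lemma div_iff:
  fixes l j c :: nat assumes l: "0 < l"
  shows "j div l = c \<longleftrightarrow> c*l \<le> j \<and> j < c*l + l"
proof
  assume h: "j div l = c"
  have e: "j = c*l + j mod l" using div_mult_mod_eq[of j l] h by simp
  have "j mod l < l" using l by simp
  then show "c*l \<le> j \<and> j < c*l + l" using e by linarith
next
  assume "c*l \<le> j \<and> j < c*l + l"
  then show "j div l = c" by (intro div_nat_eqI) (auto simp: mult.commute)
qed

lemma nonempty_matrix:
  fixes k l m n :: nat
  assumes k: "0 < k" and l: "0 < l"
  defines "A0 \<equiv> \<lambda>i j. if i < n*k \<and> j < n*l \<and> i div k = j div l then m else 0"
  shows "(\<forall>i j. (i \<ge> n*k \<or> j \<ge> n*l) \<longrightarrow> A0 i j = 0)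
      \<and> (\<forall>i < n*k. (\<Sum>j<n*l. A0 i j) = m*l)
      \<and> (\<forall>j < n*l. (\<Sum>i<n*k. A0 i j) = m*k)"
proof (intro conjI allI impI)
  fix i j :: nat assume "n*k \<le> i \<or> n*l \<le> j" then show "A0 i j = 0" by (auto simp: A0_def)
next
  fix i assume i: "i < n*k"
  define c where "c = i div k"
  have cn: "c < n" using i k by (simp add: c_def less_mult_imp_div_less mult.commute)
  have set: "{j \<in> {..<n*l}. j div l = c} = {c*l..<c*l+l}"
  proof -
    have "(c+1)*l \<le> n*l" using cn by (intro mult_le_mono1) simp
    then have "c*l+l \<le> n*l" by simp
    note bnd = this
    show ?thesis
    proof (rule set_eqI)
      fix j
      have "j div l = c \<longleftrightarrow> c*l \<le> j \<and> j < c*l+l" by (rule div_iff[OF l])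
      then show "j \<in> {j \<in> {..<n*l}. j div l = c} \<longleftrightarrow> j \<in> {c*l..<c*l+l}"
        using bnd by (simp only: mem_Collect_eq lessThan_iff atLeastLessThan_iff) linarith
    qed
  qed
  have "(\<Sum>j<n*l. A0 i j) = (\<Sum>j<n*l. if j div l = c then m else 0)"
    using i by (intro sum.cong) (simp_all add: A0_def c_def)
  also have "\<dots> = (\<Sum>j\<in>{j \<in> {..<n*l}. j div l = c}. m)"
    by (rule sum.inter_filter[symmetric]) simp
  also have "\<dots> = m*l" unfolding set by simp
  finally show "(\<Sum>j<n*l. A0 i j) = m*l" .
next
  fix j assume j: "j < n*l"
  define c where "c = j div l"
  have cn: "c < n" using j l by (simp add: c_def less_mult_imp_div_less mult.commute)
  have set: "{i \<in> {..<n*k}. i div k = c} = {c*k..<c*k+k}"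
  proof -
    have "(c+1)*k \<le> n*k" using cn by (intro mult_le_mono1) simp
    then have "c*k+k \<le> n*k" by simp
    note bnd = this
    show ?thesis
    proof (rule set_eqI)
      fix i
      have "i div k = c \<longleftrightarrow> c*k \<le> i \<and> i < c*k+k" by (rule div_iff[OF k])
      then show "i \<in> {i \<in> {..<n*k}. i div k = c} \<longleftrightarrow> i \<in> {c*k..<c*k+k}"
        using bnd by (simp only: mem_Collect_eq lessThan_iff atLeastLessThan_iff) linarith
    qed
  qed
  have "(\<Sum>i<n*k. A0 i j) = (\<Sum>i<n*k. if i div k = c then m else 0)"
    using j by (intro sum.cong) (simp_all add: A0_def c_def)
  also have "\<dots> = (\<Sum>i\<in>{i \<in> {..<n*k}. i div k = c}. m)"
    by (rule sum.inter_filter[symmetric]) simp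
  also have "\<dots> = m*k" unfolding set by simp
  finally show "(\<Sum>i<n*k. A0 i j) = m*k" .
qed



lemma lin_aux:
  fixes Fp SU SN SD SX U0 X0 N M R C L :: int
  assumes "Fp = SU - SX" "SU = SN + SD" "SD \<le> (M - N) * X0" "M * X0 \<le> SX" "SN \<le> N * U0"
    "M*U0 - SX \<le> R" "SN - N*X0 \<le> C" "L = U0 - X0"
  shows "Fp \<le> N * L \<and> Fp \<le> R + C - M*L"
proof -
  have a: "(M - N) * X0 = M*X0 - N*X0" by (simp add: algebra_simps)
  have b: "N * L = N*U0 - N*X0" "M*L = M*U0 - M*X0" using assms(8) by (simp_all add: right_diff_distrib)
  show ?thesis using assms a b by linarith
qed

lemma trans_bound:
  fixes A :: "nat \<Rightarrow> nat \<Rightarrow> nat" and N M R C :: nat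
  assumes NM: "N \<le> M" and N1: "1 \<le> N"
    and rows: "\<forall>i<N. (\<Sum>j<M. A i j) = R" and cols: "\<forall>j<M. (\<Sum>i<N. A i j) = C"
  shows "\<exists>\<sigma> \<in> transversals N M. \<exists>L::int. int (\<Sum>i<N. A i (\<sigma> i)) \<le> int N * L
           \<and> int (\<Sum>i<N. A i (\<sigma> i)) \<le> int R + int C - int M * L"
proof -
  define P where "P i j = (if i < N then int (A i j) else 0)" for i j
  define S where "S = {p. p permutes {..<M}}"
  define F where "F p = (\<Sum>i<M. P i (p i))" for p
  have finS: "finite S" unfolding S_def by (rule finite_permutations) simp
  have "id \<in> S" unfolding S_def by (simp add: permutes_id)
  then have neS: "F ` S \<noteq> {}" by auto
  obtain \<pi> where piS: "\<pi> \<in> S" and piF: "F \<pi> = Min (F ` S)"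
    using Min_in[OF finite_imageI[OF finS] neS] by auto
  have opt: "F \<pi> \<le> F \<tau>" if "\<tau> \<in> S" for \<tau>
    using piF Min_le[OF finite_imageI[OF finS]] that by auto
  have pi: "\<pi> permutes {..<M}" using piS by (simp add: S_def)
  define Q where "Q c j = P (inv \<pi> c) j" for c j
  have optQ: "(\<Sum>c<M. Q c c) \<le> (\<Sum>c<M. Q c (\<tau> c))" if tau: "\<tau> permutes {..<M}" for \<tau>
  proof -
    have e1: "(\<Sum>c<M. Q c c) = F \<pi>"
      using sum.permute[OF pi, of "\<lambda>c. Q c c"] by (simp add: F_def Q_def permutes_inverses[OF pi])
    have e2: "(\<Sum>c<M. Q c (\<tau> c)) = F (\<tau> \<circ> \<pi>)"
      using sum.permute[OF pi, of "\<lambda>c. Q c (\<tau> c)"] by (simp add: F_def Q_def permutes_inverses[OF pi])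
    have "\<tau> \<circ> \<pi> \<in> S" using permutes_compose[OF pi tau] by (simp add: S_def)
    then show ?thesis using e1 e2 opt by simp
  qed
  obtain x where x: "\<forall>c<M. \<forall>j<M. x c - x j \<le> Q c j - Q c c"
    using potentials[where M=M and Q=Q, OF optQ] by blast
  define u where "u i = P i (\<pi> i) + x (\<pi> i)" for i
  have piM: "\<pi> i < M" if "i < M" for i using permutes_in_image[OF pi] that by simp
  have cons: "u i - x j \<le> P i j" if "i < M" "j < M" for i j
  proof -
    have h: "x (\<pi> i) - x j \<le> Q (\<pi> i) j - Q (\<pi> i) (\<pi> i)" using x piM[OF that(1)] that by blast
    then show ?thesis by (simp add: u_def Q_def permutes_inverses[OF pi])
  qed
  have sumx: "(\<Sum>i<M. x (\<pi> i)) = (\<Sum>j<M. x j)"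
    using sum.permute[OF pi, of x] by simp
  have W: "F \<pi> = (\<Sum>i<M. u i) - (\<Sum>j<M. x j)"
    by (simp add: F_def u_def sum.distrib sumx)
  have M1: "M \<noteq> 0" using NM N1 by simp
  obtain j0 where j0: "j0 < M" "\<And>j. j < M \<Longrightarrow> x j0 \<le> x j"
  proof -
    have "Min (x ` {..<M}) \<in> x ` {..<M}" using M1 by (intro Min_in) auto
    then obtain j0 where "j0 < M" "x j0 = Min (x ` {..<M})" by auto
    then show ?thesis using that by auto
  qed
  obtain i0 where i0: "i0 < N" "\<And>i. i < N \<Longrightarrow> u i \<le> u i0"
  proof -
    have "0 \<in> {..<N}" using N1 by simp
    then have "{..<N} \<noteq> {}" by blast
    then have "Max (u ` {..<N}) \<in> u ` {..<N}" by (intro Max_in) auto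
    then obtain i0 where "i0 < N" "u i0 = Max (u ` {..<N})" by auto
    then show ?thesis using that by auto
  qed
  have dummy: "u i \<le> x j0" if "N \<le> i" "i < M" for i
    using cons[OF that(2) j0(1)] that by (simp add: P_def)
  have split: "{..<M} = {..<N} \<union> {N..<M}" using NM by auto
  have su: "(\<Sum>i<M. u i) = (\<Sum>i<N. u i) + (\<Sum>i\<in>{N..<M}. u i)"
    by (subst split, rule sum.union_disjoint) auto
  have d1: "(\<Sum>i\<in>{N..<M}. u i) \<le> int (M - N) * x j0"
    using sum_bounded_above[of "{N..<M}" u "x j0"] dummy by auto
  have sx: "int M * x j0 \<le> (\<Sum>j<M. x j)"
    using sum_bounded_below[of "{..<M}" "x j0" x] j0 by auto
  have sN: "(\<Sum>i<N. u i) \<le> int N * u i0"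
    using sum_bounded_above[of "{..<N}" u "u i0"] i0 by auto
  have r0: "(\<Sum>j<M. u i0 - x j) \<le> int R"
  proof -
    have "(\<Sum>j<M. u i0 - x j) \<le> (\<Sum>j<M. P i0 j)"
      by (rule sum_mono) (use cons i0 NM in auto)
    also have "\<dots> = int (\<Sum>j<M. A i0 j)" using i0 by (simp add: P_def)
    finally show ?thesis using rows i0 by simp
  qed
  have r0': "(\<Sum>j<M. u i0 - x j) = int M * u i0 - (\<Sum>j<M. x j)"
    by (simp add: sum_subtractf)
  have c0: "(\<Sum>i<N. u i - x j0) \<le> int C"
  proof -
    have "(\<Sum>i<N. u i - x j0) \<le> (\<Sum>i<N. P i j0)"
      by (rule sum_mono) (use cons j0 NM in auto)
    also have "\<dots> = int (\<Sum>i<N. A i j0)" by (simp add: P_def)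
    finally show ?thesis using cols j0 by simp
  qed
  have c0': "(\<Sum>i<N. u i - x j0) = (\<Sum>i<N. u i) - int N * x j0"
    by (simp add: sum_subtractf)
  define \<sigma> where "\<sigma> i = (if i < N then \<pi> i else 0)" for i
  have sig: "\<sigma> \<in> transversals N M"
  proof -
    have "inj_on \<sigma> {..<N}"
      using permutes_inj[OF pi] by (auto simp: \<sigma>_def inj_on_def inj_def)
    moreover have "\<sigma> ` {..<N} \<subseteq> {..<M}" using piM NM by (auto simp: \<sigma>_def)
    ultimately show ?thesis by (auto simp: transversals_def \<sigma>_def)
  qed
  have Wn: "F \<pi> = int (\<Sum>i<N. A i (\<sigma> i))"
  proof -
    have "F \<pi> = (\<Sum>i<N. P i (\<pi> i)) + (\<Sum>i\<in>{N..<M}. P i (\<pi> i))"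
      unfolding F_def by (subst split, rule sum.union_disjoint) auto
    also have "(\<Sum>i\<in>{N..<M}. P i (\<pi> i)) = 0" by (simp add: P_def)
    also have "(\<Sum>i<N. P i (\<pi> i)) = int (\<Sum>i<N. A i (\<sigma> i))" by (simp add: P_def \<sigma>_def)
    finally show ?thesis by simp
  qed
  define L where "L = u i0 - x j0"
  have e3: "int (M - N) = int M - int N" using NM by (simp add: of_nat_diff)
  have fin: "F \<pi> \<le> int N * L \<and> F \<pi> \<le> int R + int C - int M * L"
    by (rule lin_aux[OF W su d1[unfolded e3] sx sN r0[unfolded r0'] c0[unfolded c0'] L_def])
  show ?thesis
    by (intro bexI[OF _ sig] exI[of _ L]) (use fin Wn in simp)
qed

theorem theorem5p2:
  fixes k l m n q r :: nat
  assumes "0 < k" "k \<le> l" "gcd k l = 1" "1 \<le> n"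
    and "m = q*n + r" "r < n"
  shows "int (U k l m n) \<le> max (int (n*k*q)) (int (n*k*q) + int r * int (k+l) - int (n*l))"
proof -
  let ?B = "max (int (n*k*q)) (int (n*k*q) + int r * int (k+l) - int (n*l))"
  have bnd: "int (tropdet (n*k) (n*l) A) \<le> ?B" if A: "A \<in> Dkl k l m n" for A
  proof -
    have NM: "n*k \<le> n*l" using assms by simp
    have N1: "1 \<le> n*k" using assms by (simp add: Suc_le_eq)
    have rows: "\<forall>i<n*k. (\<Sum>j<n*l. A i j) = m*l" and cols: "\<forall>j<n*l. (\<Sum>i<n*k. A i j) = m*k"
      using A by (auto simp: Dkl_def)
    obtain \<sigma> L where sig: "\<sigma> \<in> transversals (n*k) (n*l)"
      and h1: "int (\<Sum>i<n*k. A i (\<sigma> i)) \<le> int (n*k) * L"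
      and h2: "int (\<Sum>i<n*k. A i (\<sigma> i)) \<le> int (m*l) + int (m*k) - int (n*l) * L"
      using trans_bound[OF NM N1 rows cols] by blast
    let ?f = "\<lambda>\<sigma>. \<Sum>i<n*k. A i (\<sigma> i)"
    have fin: "finite (?f ` transversals (n*k) (n*l))"
    proof (rule finite_subset[of _ "{..(\<Sum>i<n*k. \<Sum>j<n*l. A i j)}"])
      show "?f ` transversals (n*k) (n*l) \<subseteq> {..(\<Sum>i<n*k. \<Sum>j<n*l. A i j)}"
      proof
        fix z assume "z \<in> ?f ` transversals (n*k) (n*l)"
        then obtain \<tau> where t: "\<tau> \<in> transversals (n*k) (n*l)" "z = ?f \<tau>" by auto
        have "?f \<tau> \<le> (\<Sum>i<n*k. \<Sum>j<n*l. A i j)"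
        proof (rule sum_mono)
          fix i assume "i \<in> {..<n*k}"
          then have "\<tau> i \<in> {..<n*l}" using t by (auto simp: transversals_def)
          then show "A i (\<tau> i) \<le> (\<Sum>j<n*l. A i j)" by (rule member_le_sum) auto
        qed
        then show "z \<in> {..(\<Sum>i<n*k. \<Sum>j<n*l. A i j)}" using t by simp
      qed
    qed simp
    have "tropdet (n*k) (n*l) A \<le> ?f \<sigma>"
      unfolding tropdet_def using fin sig by (intro Min_le) auto
    moreover have "int (?f \<sigma>) \<le> ?B"
      by (rule arith_final[OF h1 h2 assms(5,6,2)])
    ultimately show ?thesis by linarith
  qed
  define T where "T = tropdet (n*k) (n*l) ` Dkl k l m n"
  have finT: "finite T"
  proof (rule finite_subset[of _ "{..nat ?B}"])
    show "T \<subseteq> {..nat ?B}"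
    proof
      fix t assume "t \<in> T"
      then obtain A where "A \<in> Dkl k l m n" "t = tropdet (n*k) (n*l) A" by (auto simp: T_def)
      then have "int t \<le> ?B" using bnd by simp
      then have "nat (int t) \<le> nat ?B" by (rule nat_mono)
      then show "t \<in> {..nat ?B}" by simp
    qed
  qed simp
  have "(\<lambda>i j. if i < n*k \<and> j < n*l \<and> i div k = j div l then m else 0) \<in> Dkl k l m n"
    unfolding Dkl_def mem_Collect_eq by (rule nonempty_matrix) (use assms in auto)
  then have neT: "T \<noteq> {}" by (auto simp: T_def)
  have "Max T \<in> T" by (rule Max_in[OF finT neT])
  then obtain A where A: "A \<in> Dkl k l m n" "Max T = tropdet (n*k) (n*l) A" by (auto simp: T_def)
  have "U k l m n = Max T" unfolding U_def T_def ..
  then show ?thesis using bnd[OF A(1)] A(2) by simp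
qed


end
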